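(* In every run of the algorithm described in the context in which at most $t$ processes crash, if the writer $p_w$ does not crash during an invocation of $\mathsf{write}()$, then this invocation terminates.
   Context: Model. There are $n$ asynchronous processes $p_1,\dots,p_n$, of which up to $t<n/2$ may crash; a process runs its algorithm correctly until it crashes, and a process that never crashes is correct. Each ordered pair of processes is linked by a reliable (no loss, corruption, duplication or creation; every message sent to a correct process is eventually received), asynchronous, not necessarily FIFO channel. $p_w$ is the single writer, invoking writes sequentially; $v_0$ is the initial value. Messages: $\textsc{write}(b,v)$ with $b\in\{0,1\}$, which stands for the two types $\textsc{write0}(v)$ and $\textsc{write1}(v)$; $\textsc{read}()$; $\textsc{proceed}()$. Variables of $p_i$. These are: $history_i$ with $history_i[0]=v_0$; $w\_sync_i[1..n]$, initially all $0$; $r\_sync_i[1..n]$, initially all $0$. $\mathsf{write}(v)$ by $p_w$: $wsn\gets w\_sync_w[w]+1$; $w\_sync_w[w]\gets wsn$; $history_w[wsn]\gets v$. Send $\textsc{write}(wsn\bmod 2,v)$ to each $p_j$ with $w\_sync_w[j]=wsn-1$. Wait until at least $n-t$ indices $j$ have $w\_sync_w[j]=wsn$. Return. $\mathsf{read}()$ by $p_i$: $r\_sync_i[i]\gets r\_sync_i[i]+1$ and call the new value $rsn$. Send $\textsc{read}()$ to all $p_j$ with $j\ne i$. Wait until at least $n-t$ indices $j$ have $r\_sync_i[j]=rsn$. Let $sn\gets w\_sync_i[i]$. Wait until at least $n-t$ indices $j$ have $w\_sync_i[j]\ge sn$. Return $history_i[sn]$. On receipt of $\textsc{write}(b,v)$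 from $p_j$ at $p_i$: Wait until $b=(w\_sync_i[j]+1)\bmod 2$. Let $wsn\gets w\_sync_i[j]+1$. If $wsn=w\_sync_i[i]+1$, then set $w\_sync_i[i]\gets wsn$ and $history_i[wsn]\gets v$, and send $\textsc{write}(wsn\bmod 2,v)$ to each $p_\ell$ with $w\_sync_i[\ell]=wsn-1$. Else, if $wsn<w\_sync_i[i]$, send $\textsc{write}((wsn+1)\bmod 2,history_i[wsn+1])$ to $p_j$. Finally set $w\_sync_i[j]\gets wsn$. On receipt of $\textsc{read}()$ from $p_j$ at $p_i$: Let $sn\gets w\_sync_i[i]$; wait until $w\_sync_i[j]\ge sn$; send $\textsc{proceed}()$ to $p_j$. On receipt of $\textsc{proceed}()$ from $p_j$ at $p_i$: $r\_sync_i[j]\gets r\_sync_i[j]+1$. Message handlers run concurrently; a waiting handler does not block the reception of other messages. *)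

theory Defs
  imports Main "HOL-Library.Multiset"
begin

text \<open>Processes are indexed by 1..n (only those indices
are meaningful).  Waiting statements are modelled as guarded atomic steps.\<close>

datatype 'v msg = WriteM nat 'v | ReadM | ProceedM
  (* WriteM b v with b in {0,1} stands for write0(v) / write1(v) *)

datatype 'v handler =
    HWrite nat nat 'v   (* pending handler of write(b,v) received from p_j: HWrite j b v *)
  | HRead nat nat       (* pending handler of read() received from p_j, with sn read at receipt *)

datatype opstate =
    NoOp
  | WOp nat       (* write pending, waiting for acks of wsn *)
  | ROp1 nat      (* read pending, first wait, with rsn *)
  | ROp2 nat      (* read pending, second wait, with sn *)

record 'v lstate =
  hist   :: "nat \<Rightarrow> 'v"
  wsync  :: "nat \<Rightarrow> nat"
  rsync  :: "nat \<Rightarrow> nat"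
  pend   :: "'v handler multiset"
  op     :: opstate
  crashed :: bool

record 'v gstate =
  procs :: "nat \<Rightarrow> 'v lstate"
  chan  :: "(nat \<times> nat \<times> 'v msg) multiset"   (* in-transit messages (source, destination, message) *)

datatype 'v action =
    InvWrite 'v
  | InvRead nat
  | OpStep nat           (* process i passes the wait statement of its pending operation *)
  | Deliver nat nat "'v msg"   (* reception of a message (src, dst, m) *)
  | Exec nat "'v handler"      (* process i executes a pending handler whose wait is satisfied *)
  | Crash nat
  | Stutter

definition send_to :: "nat \<Rightarrow> nat set \<Rightarrow> 'v msg \<Rightarrow> (nat \<times> nat \<times> 'v msg) multiset" where
  "send_to i D m = image_mset (\<lambda>l. (i, l, m)) (mset_set D)"

definition upd_proc :: "nat \<Rightarrow> ('v lstate \<Rightarrow> 'v lstate) \<Rightarrow> 'v gstate \<Rightarrow> 'v gstate" where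
  "upd_proc i f s = s\<lparr>procs := (procs s)(i := f (procs s i))\<rparr>"

definition initial :: "nat \<Rightarrow> 'v \<Rightarrow> 'v gstate \<Rightarrow> bool" where
  "initial n v0 s \<longleftrightarrow> chan s = {#} \<and>
     (\<forall>i\<in>{1..n}. hist (procs s i) 0 = v0 \<and> wsync (procs s i) = (\<lambda>_. 0) \<and>
        rsync (procs s i) = (\<lambda>_. 0) \<and> pend (procs s i) = {#} \<and>
        op (procs s i) = NoOp \<and> \<not> crashed (procs s i))"

fun enabled :: "nat \<Rightarrow> nat \<Rightarrow> nat \<Rightarrow> 'v gstate \<Rightarrow> 'v action \<Rightarrow> bool" where
  "enabled n t w s (InvWrite v) \<longleftrightarrow> \<not> crashed (procs s w) \<and> op (procs s w) = NoOp"
| "enabled n t w s (InvRead i) \<longleftrightarrow> i \<in> {1..n} \<and> \<not> crashed (procs s i) \<and> op (procs s i) = NoOp"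
| "enabled n t w s (OpStep i) \<longleftrightarrow> i \<in> {1..n} \<and> \<not> crashed (procs s i) \<and>
     (case op (procs s i) of
        NoOp \<Rightarrow> False
      | WOp wsn \<Rightarrow> card {j\<in>{1..n}. wsync (procs s i) j = wsn} \<ge> n - t
      | ROp1 rsn \<Rightarrow> card {j\<in>{1..n}. rsync (procs s i) j = rsn} \<ge> n - t
      | ROp2 sn \<Rightarrow> card {j\<in>{1..n}. wsync (procs s i) j \<ge> sn} \<ge> n - t)"
| "enabled n t w s (Deliver src dst m) \<longleftrightarrow> (src, dst, m) \<in># chan s \<and> \<not> crashed (procs s dst)"
| "enabled n t w s (Exec i h) \<longleftrightarrow> i \<in> {1..n} \<and> \<not> crashed (procs s i) \<and> h \<in># pend (procs s i) \<and>
     (case h of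
        HWrite j b v \<Rightarrow> b = (wsync (procs s i) j + 1) mod 2
      | HRead j sn \<Rightarrow> wsync (procs s i) j \<ge> sn)"
| "enabled n t w s (Crash i) \<longleftrightarrow> i \<in> {1..n} \<and> \<not> crashed (procs s i)"
| "enabled n t w s Stutter \<longleftrightarrow> True"

fun effect :: "nat \<Rightarrow> nat \<Rightarrow> nat \<Rightarrow> 'v gstate \<Rightarrow> 'v action \<Rightarrow> 'v gstate" where
  "effect n t w s (InvWrite v) =
     (let p = procs s w; wsn = wsync p w + 1;
          p' = p\<lparr>wsync := (wsync p)(w := wsn), hist := (hist p)(wsn := v), op := WOp wsn\<rparr>
      in s\<lparr>procs := (procs s)(w := p'),
           chan := chan s + send_to w {j\<in>{1..n}. wsync p' j = wsn - 1} (WriteM (wsn mod 2) v)\<rparr>)"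
| "effect n t w s (InvRead i) =
     (let p = procs s i; rsn = rsync p i + 1;
          p' = p\<lparr>rsync := (rsync p)(i := rsn), op := ROp1 rsn\<rparr>
      in s\<lparr>procs := (procs s)(i := p'),
           chan := chan s + send_to i {j\<in>{1..n}. j \<noteq> i} ReadM\<rparr>)"
| "effect n t w s (OpStep i) =
     upd_proc i (\<lambda>p. case op p of
        ROp1 rsn \<Rightarrow> p\<lparr>op := ROp2 (wsync p i)\<rparr>
      | _ \<Rightarrow> p\<lparr>op := NoOp\<rparr>) s"
| "effect n t w s (Deliver src dst m) =
     (let s1 = s\<lparr>chan := chan s - {#(src, dst, m)#}\<rparr> in
      case m of
        WriteM b v \<Rightarrow> upd_proc dst (\<lambda>p. p\<lparr>pend := add_mset (HWrite src b v) (pend p)\<rparr>) s1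
      | ReadM \<Rightarrow> upd_proc dst (\<lambda>p. p\<lparr>pend := add_mset (HRead src (wsync p dst)) (pend p)\<rparr>) s1
      | ProceedM \<Rightarrow> upd_proc dst (\<lambda>p. p\<lparr>rsync := (rsync p)(src := rsync p src + 1)\<rparr>) s1)"
| "effect n t w s (Exec i h) =
     (let p0 = procs s i; p = p0\<lparr>pend := pend p0 - {#h#}\<rparr> in
      case h of
        HWrite j b v \<Rightarrow>
          (let wsn = wsync p j + 1 in
           if wsn = wsync p i + 1 then
             (let p' = p\<lparr>wsync := (wsync p)(i := wsn), hist := (hist p)(wsn := v)\<rparr>
              in s\<lparr>procs := (procs s)(i := p'\<lparr>wsync := (wsync p')(j := wsn)\<rparr>),
                   chan := chan s + send_to i {l\<in>{1..n}. wsync p' l = wsn - 1} (WriteM (wsn mod 2) v)\<rparr>)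
           else if wsn < wsync p i then
             s\<lparr>procs := (procs s)(i := p\<lparr>wsync := (wsync p)(j := wsn)\<rparr>),
               chan := chan s + {#(i, j, WriteM ((wsn + 1) mod 2) (hist p (wsn + 1)))#}\<rparr>
           else
             s\<lparr>procs := (procs s)(i := p\<lparr>wsync := (wsync p)(j := wsn)\<rparr>)\<rparr>)
      | HRead j sn \<Rightarrow>
          s\<lparr>procs := (procs s)(i := p), chan := chan s + {#(i, j, ProceedM)#}\<rparr>)"
| "effect n t w s (Crash i) = upd_proc i (\<lambda>p. p\<lparr>crashed := True\<rparr>) s"
| "effect n t w s Stutter = s"

definition step :: "nat \<Rightarrow> nat \<Rightarrow> nat \<Rightarrow> 'v gstate \<Rightarrow> 'v action \<Rightarrow> 'v gstate \<Rightarrow> bool" where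
  "step n t w s a s' \<longleftrightarrow> enabled n t w s a \<and> s' = effect n t w s a"

text \<open>Actions subject to (weak) fairness: message receptions (reliable channels) and
local steps of processes (handlers and operation code).  Invocations, crashes and
stuttering are not forced.\<close>
fun fair_action :: "'v action \<Rightarrow> bool" where
  "fair_action (Deliver _ _ _) = True"
| "fair_action (Exec _ _) = True"
| "fair_action (OpStep _) = True"
| "fair_action _ = False"

definition is_run :: "nat \<Rightarrow> nat \<Rightarrow> nat \<Rightarrow> 'v \<Rightarrow> (nat \<Rightarrow> 'v gstate) \<Rightarrow> (nat \<Rightarrow> 'v action) \<Rightarrow> bool" where
  "is_run n t w v0 \<sigma> act \<longleftrightarrow>
     initial n v0 (\<sigma> 0) \<and> (\<forall>k. step n t w (\<sigma> k) (act k) (\<sigma> (Suc k)))"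

definition weakly_fair :: "nat \<Rightarrow> nat \<Rightarrow> nat \<Rightarrow> (nat \<Rightarrow> 'v gstate) \<Rightarrow> (nat \<Rightarrow> 'v action) \<Rightarrow> bool" where
  "weakly_fair n t w \<sigma> act \<longleftrightarrow>
     (\<forall>a k. fair_action a \<and> (\<forall>k'\<ge>k. enabled n t w (\<sigma> k') a) \<longrightarrow> (\<exists>k'\<ge>k. act k' = a))"

definition faulty :: "nat \<Rightarrow> (nat \<Rightarrow> 'v gstate) \<Rightarrow> nat set" where
  "faulty n \<sigma> = {i\<in>{1..n}. \<exists>k. crashed (procs (\<sigma> k) i)}"

end

theory Submission
  imports Defs
begin


fun iswm :: "'v msg \<Rightarrow> bool" where "iswm (WriteM b v) = True" | "iswm ReadM = False" | "iswm ProceedM = False"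
fun mbit :: "'v msg \<Rightarrow> nat" where "mbit (WriteM b v) = b" | "mbit ReadM = 0" | "mbit ProceedM = 0"
fun hfrom :: "nat \<Rightarrow> 'v handler \<Rightarrow> bool" where "hfrom a (HWrite j b v) = (j = a)" | "hfrom a (HRead j sn) = False"
fun hbit :: "'v handler \<Rightarrow> nat" where "hbit (HWrite j b v) = b" | "hbit (HRead j sn) = 0"
fun hsrc :: "'v handler \<Rightarrow> nat" where "hsrc (HWrite j b v) = j" | "hsrc (HRead j sn) = j"

definition trc :: "(nat \<times> nat \<times> 'v msg) multiset \<Rightarrow> nat \<Rightarrow> nat \<Rightarrow> nat multiset" where
 "trc C a b = image_mset (\<lambda>x. mbit (snd (snd x))) (filter_mset (\<lambda>x. fst x = a \<and> fst (snd x) = b \<and> iswm (snd (snd x))) C)"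
definition trp :: "'v handler multiset \<Rightarrow> nat \<Rightarrow> nat multiset" where
 "trp P a = image_mset hbit (filter_mset (hfrom a) P)"
definition tr :: "'v gstate \<Rightarrow> nat \<Rightarrow> nat \<Rightarrow> nat multiset" where
 "tr s a b = trc (chan s) a b + trp (pend (procs s b)) a"
definition bits :: "nat \<Rightarrow> nat \<Rightarrow> nat multiset" where
 "bits lo hi = mset (map (\<lambda>x. x mod 2) [Suc lo..<Suc hi])"

lemma trc_plus[simp]: "trc (A + B) a b = trc A a b + trc B a b"
  by (simp add: trc_def)
lemma trc_empty[simp]: "trc {#} a b = {#}"
  by (simp add: trc_def)
lemma trc_add[simp]: "trc (add_mset x A) a b = (if fst x = a \<and> fst (snd x) = b \<and> iswm (snd (snd x)) then add_mset (mbit (snd (snd x))) (trc A a b) else trc A a b)"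
  by (simp add: trc_def)
lemma trc_diff: "x \<in># C \<Longrightarrow> trc (C - {#x#}) a b = trc C a b - (if fst x = a \<and> fst (snd x) = b \<and> iswm (snd (snd x)) then {#mbit (snd (snd x))#} else {#})"
proof -
  assume "x \<in># C"
  then have "C = add_mset x (C - {#x#})" by simp
  then have "trc C a b = trc (add_mset x (C - {#x#})) a b" by simp
  then show ?thesis by (simp split: if_splits)
qed
lemma trc_send[simp]: "finite D \<Longrightarrow> trc (send_to x D m) a b = (if x = a \<and> b \<in> D \<and> iswm m then {#mbit m#} else {#})"
proof -
  assume f: "finite D"
  have "trc (send_to x D m) a b = image_mset (\<lambda>l. mbit m) (mset_set {l\<in>D. x = a \<and> l = b \<and> iswm m})"
    unfolding trc_def send_to_def by (simp add: filter_mset_image_mset filter_mset_mset_set f image_mset.compositionality o_def)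
  also have "\<dots> = (if x = a \<and> b \<in> D \<and> iswm m then {#mbit m#} else {#})"
  proof (cases "x = a \<and> b \<in> D \<and> iswm m")
    case True
    then have "{l\<in>D. x = a \<and> l = b \<and> iswm m} = {b}" by auto
    then show ?thesis using True by simp
  next
    case False
    then have e: "{l\<in>D. x = a \<and> l = b \<and> iswm m} = {}" by auto
    show ?thesis unfolding e using False by simp
  qed
  finally show ?thesis .
qed

lemma trp_add[simp]: "trp (add_mset h P) a = (if hfrom a h then add_mset (hbit h) (trp P a) else trp P a)"
  by (simp add: trp_def)
lemma trp_diff: "h \<in># P \<Longrightarrow> trp (P - {#h#}) a = trp P a - (if hfrom a h then {#hbit h#} else {#})"
proof -
  assume "h \<in># P"
  then have "P = add_mset h (P - {#h#})" by simp
  then have "trp P a = trp (add_mset h (P - {#h#})) a" by simp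
  then show ?thesis by (simp split: if_splits)
qed

lemma bits_snoc: "lo \<le> hi \<Longrightarrow> bits lo (Suc hi) = add_mset (Suc hi mod 2) (bits lo hi)"
  by (simp add: bits_def)
lemma bits_cons: "lo < hi \<Longrightarrow> bits lo hi = add_mset (Suc lo mod 2) (bits (Suc lo) hi)"
  unfolding bits_def by (simp add: upt_rec)
lemma bits_empty: "hi \<le> lo \<Longrightarrow> bits lo hi = {#}"
  by (simp add: bits_def)
lemma bits_nonempty: "x \<in># bits lo hi \<Longrightarrow> lo < hi"
  by (cases "hi \<le> lo") (auto simp: bits_empty)
lemma bits_first: "lo < hi \<Longrightarrow> Suc lo mod 2 \<in># bits lo hi"
  by (simp add: bits_cons)



definition Inv :: "nat \<Rightarrow> nat \<Rightarrow> 'v gstate \<Rightarrow> bool" where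
"Inv n w s \<longleftrightarrow>
 (\<forall>x\<in>#chan s. fst x \<in> {1..n} \<and> fst (snd x) \<in> {1..n} \<and> fst x \<noteq> fst (snd x)) \<and>
 (\<forall>i\<in>{1..n}. \<forall>h\<in>#pend (procs s i). hsrc h \<in> {1..n} \<and> hsrc h \<noteq> i) \<and>
 (\<forall>i\<in>{1..n}. \<forall>j\<in>{1..n}. i \<noteq> j \<longrightarrow>
    wsync (procs s i) j \<le> wsync (procs s i) i \<and>
    wsync (procs s j) i \<le> wsync (procs s i) i \<and>
    wsync (procs s j) i \<le> wsync (procs s i) j + 1 \<and>
    tr s i j = bits (wsync (procs s j) i) (min (wsync (procs s i) i) (wsync (procs s i) j + 1))) \<and>
 (\<forall>i\<in>{1..n}. wsync (procs s i) i \<le> wsync (procs s w) w)"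



lemma Inv_exec_abs:
  fixes s s' :: "'v gstate"
  assumes I: "Inv n w s" and wn: "w \<in> {1..n}"
    and ir: "i \<in> {1..n}" and hin: "HWrite j \<beta> v \<in># pend (procs s i)"
    and bet: "\<beta> = Suc (wsync (procs s i) j) mod 2"
    and fr: "\<And>x. x \<noteq> i \<Longrightarrow> procs s' x = procs s x"
    and pd: "pend (procs s' i) = pend (procs s i) - {#HWrite j \<beta> v#}"
    and ws: "wsync (procs s' i) = (wsync (procs s i))(i := (if wsync (procs s i) j = wsync (procs s i) i then Suc (wsync (procs s i) j) else wsync (procs s i) i), j := Suc (wsync (procs s i) j))"
    and ch: "chan s' = chan s + (if wsync (procs s i) j = wsync (procs s i) i
         then send_to i {l\<in>{1..n}. ((wsync (procs s i))(i := Suc (wsync (procs s i) j))) l = wsync (procs s i) j} (WriteM (Suc (wsync (procs s i) j) mod 2) v)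
         else if Suc (wsync (procs s i) j) < wsync (procs s i) i then {#(i,j,WriteM (Suc (Suc (wsync (procs s i) j)) mod 2) u)#} else {#})"
  shows "Inv n w s' \<and> wsync (procs s' w) w = wsync (procs s w) w"
proof -
  define W where "W = (\<lambda>x y. wsync (procs s x) y)"
  define c where "c = W i j"
  define Ai where "Ai = W i i"
  have jr: "j \<in> {1..n}" and ji: "j \<noteq> i" using I ir hin unfolding Inv_def by fastforce+
  have pair: "\<And>a b. a \<in> {1..n} \<Longrightarrow> b \<in> {1..n} \<Longrightarrow> a \<noteq> b \<Longrightarrow>
    W a b \<le> W a a \<and> W b a \<le> W a a \<and> W b a \<le> W a b + 1 \<and> tr s a b = bits (W b a) (min (W a a) (W a b + 1))"
    using I unfolding Inv_def W_def by blast
  have Q: "\<And>a. a \<in> {1..n} \<Longrightarrow> W a a \<le> W w w" using I unfolding Inv_def W_def by blast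
  have trji: "tr s j i = bits c (min (W j j) (W j i + 1))" using pair[OF jr ir ji] c_def by simp
  have "\<beta> \<in># tr s j i" using hin unfolding tr_def trp_def by force
  then have clt: "c < min (W j j) (W j i + 1)" using trji bits_nonempty by metis
  have clt2: "Suc c \<le> W j j" "c \<le> W j i" using clt by auto
  have cle: "c \<le> Ai" using pair[OF ir jr ji[symmetric]] c_def Ai_def by simp
  have adopt_nw: "c = Ai \<Longrightarrow> i \<noteq> w" using clt Q[OF jr] cle c_def Ai_def by auto
  define Ai' where "Ai' = (if c = Ai then Suc c else Ai)"
  have W': "\<And>x y. wsync (procs s' x) y = (if x = i then (if y = j then Suc c else if y = i then Ai' else W x y) else W x y)"
    using fr ws ji unfolding W_def c_def Ai_def Ai'_def by auto
  define D where "D = {l\<in>{1..n}. ((W i)(i := Suc c)) l = c}"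
  have Dm: "\<And>b. b \<in> D \<longleftrightarrow> b \<in> {1..n} \<and> b \<noteq> i \<and> W i b = c" unfolding D_def by auto
  have finD: "finite D" unfolding D_def by simp
  have ch': "chan s' = chan s + (if c = Ai then send_to i D (WriteM (Suc c mod 2) v) else if Suc c < Ai then {#(i,j,WriteM (Suc (Suc c) mod 2) u)#} else {#})"
    using ch unfolding D_def c_def Ai_def W_def by simp
  have trX: "\<And>a b. trc (chan s') a b = trc (chan s) a b + (if a = i \<and> c = Ai \<and> b \<in> {1..n} \<and> b \<noteq> i \<and> W i b = c then {#Suc c mod 2#}
      else if a = i \<and> b = j \<and> Suc c < Ai \<and> c \<noteq> Ai then {#Suc (Suc c) mod 2#} else {#})"
    by (cases "c = Ai"; cases "Suc c < Ai") (auto simp: ch' Dm finD)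
  have trP: "\<And>a b. trp (pend (procs s' b)) a = (if b = i then trp (pend (procs s b)) a - (if a = j then {#\<beta>#} else {#}) else trp (pend (procs s b)) a)"
    using fr pd trp_diff[OF hin] by auto
  have bmem: "\<beta> \<in># trp (pend (procs s i)) j" using hin unfolding trp_def by force
  have trs': "\<And>a b. tr s' a b = (if b = i \<and> a = j then tr s a b - {#\<beta>#} else tr s a b) + (if a = i \<and> c = Ai \<and> b \<in> {1..n} \<and> b \<noteq> i \<and> W i b = c then {#Suc c mod 2#}
      else if a = i \<and> b = j \<and> Suc c < Ai \<and> c \<noteq> Ai then {#Suc (Suc c) mod 2#} else {#})"
  proof -
    fix a b
    have e: "tr s' a b = trc (chan s') a b + trp (pend (procs s' b)) a" by (simp add: tr_def)
    show "tr s' a b = (if b = i \<and> a = j then tr s a b - {#\<beta>#} else tr s a b) + (if a = i \<and> c = Ai \<and> b \<in> {1..n} \<and> b \<noteq> i \<and> W i b = c then {#Suc c mod 2#}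
      else if a = i \<and> b = j \<and> Suc c < Ai \<and> c \<noteq> Ai then {#Suc (Suc c) mod 2#} else {#})"
    proof (cases "b = i \<and> a = j")
      case True
      then have ab: "b = i" "a = j" by auto
      have x0: "trc (chan s') j i = trc (chan s) j i" using trX[where a=j and b=i] ji by simp
      have p0: "trp (pend (procs s' i)) j = trp (pend (procs s i)) j - {#\<beta>#}" using trP[where a=j and b=i] by simp
      have sub: "{#\<beta>#} \<subseteq># trp (pend (procs s i)) j" using bmem by simp
      have "tr s' j i = trc (chan s) j i + (trp (pend (procs s i)) j - {#\<beta>#})"
        using e x0 p0 ab by simp
      also have "\<dots> = tr s j i - {#\<beta>#}" unfolding tr_def using multiset_diff_union_assoc[OF sub] by simp
      finally show ?thesis using ab ji by simp
    next
      case False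
      have p0: "trp (pend (procs s' b)) a = trp (pend (procs s b)) a" using trP[where a=a and b=b] False by auto
      have nf: "(if b = i \<and> a = j then tr s a b - {#\<beta>#} else tr s a b) = tr s a b" by (rule if_not_P[OF False])
      show ?thesis unfolding nf unfolding e trX p0 tr_def by simp
    qed
  qed
  have betc: "\<beta> = Suc c mod 2" using bet c_def W_def by simp
  have P3: "tr s' a b = bits (wsync (procs s' b) a) (min (wsync (procs s' a) a) (wsync (procs s' a) b + 1))"
    if ar: "a \<in> {1..n}" and br: "b \<in> {1..n}" and ab: "a \<noteq> b" for a b
  proof -
    have pab: "W a b \<le> W a a \<and> W b a \<le> W a a \<and> W b a \<le> W a b + 1 \<and> tr s a b = bits (W b a) (min (W a a) (W a b + 1))"
      using pair[OF ar br ab] .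
    consider "b = i \<and> a = j" | "a = i \<and> b = j" | "a = i \<and> b \<noteq> j" | "b = i \<and> a \<noteq> j" | "a \<noteq> i \<and> b \<noteq> i" by blast
    then show ?thesis
    proof cases
      case 1
      then have "tr s' a b = bits c (min (W j j) (W j i + 1)) - {#\<beta>#}" using trs' trji ji by simp
      also have "\<dots> = bits (Suc c) (min (W j j) (W j i + 1))" using bits_cons[OF clt] betc by simp
      finally show ?thesis using 1 W' ji by simp
    next
      case 2
      then have t: "tr s' a b = bits (W j i) (min Ai (Suc c)) + (if c = Ai then {#Suc c mod 2#}
      else if Suc c < Ai then {#Suc (Suc c) mod 2#} else {#})" using trs' pab jr ji c_def Ai_def by auto
      show ?thesis
      proof (cases "c = Ai")
        case True
        have "W j i \<le> c" using pab 2 True Ai_def by simp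
        then show ?thesis using t True 2 W' ji bits_snoc[of "W j i" c] Ai'_def by (simp add: min_def)
      next
        case False
        show ?thesis
        proof (cases "Suc c < Ai")
          case True
          have "W j i \<le> Suc c" using pab 2 c_def by simp
          then have m: "min Ai (Suc (Suc c)) = Suc (Suc c)" "min Ai (Suc c) = Suc c" using True by auto
          show ?thesis using t True False 2 W' ji bits_snoc[of "W j i" "Suc c"] Ai'_def m \<open>W j i \<le> Suc c\<close> by simp
        next
          case F2: False
          then have "Ai = Suc c" using False cle by simp
          then show ?thesis using t F2 False 2 W' ji Ai'_def by (simp add: min_def)
        qed
      qed
    next
      case 3
      then have bi: "b \<noteq> i" using ab by auto
      have t: "tr s' a b = bits (W b i) (min Ai (Suc (W i b))) + (if c = Ai \<and> W i b = c then {#Suc c mod 2#} else {#})"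
        using trs' pab br bi 3 Ai_def by auto
      show ?thesis
      proof (cases "c = Ai")
        case True
        show ?thesis
        proof (cases "W i b = c")
          case T2: True
          have "W b i \<le> c" using pab 3 True Ai_def by simp
          then show ?thesis using t True T2 3 bi ji W' bits_snoc[of "W b i" c] Ai'_def by (simp add: min_def)
        next
          case F2: False
          have "W i b < c" using pab 3 True F2 Ai_def by simp
          then have m: "min Ai (Suc (W i b)) = Suc (W i b)" "min (Suc Ai) (Suc (W i b)) = Suc (W i b)" using True by auto
          show ?thesis using t True F2 3 bi ji W' Ai'_def m by simp
        qed
      next
        case False
        then show ?thesis using t 3 bi ji W' Ai'_def Ai_def by simp
      qed
    next
      case 4
      then have ai: "a \<noteq> i" using ab by auto
      have "tr s' a b = tr s a b" using trs' 4 ai by simp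
      then show ?thesis using pab 4 ai W' by simp
    next
      case 5
      have "tr s' a b = tr s a b" using trs' 5 by simp
      then show ?thesis using pab 5 W' by simp
    qed
  qed
  have P12: "wsync (procs s' a) b \<le> wsync (procs s' a) a \<and> wsync (procs s' b) a \<le> wsync (procs s' a) a \<and> wsync (procs s' b) a \<le> wsync (procs s' a) b + 1"
    if ar: "a \<in> {1..n}" and br: "b \<in> {1..n}" and ab: "a \<noteq> b" for a b
  proof -
    have pab: "W a b \<le> W a a \<and> W b a \<le> W a a \<and> W b a \<le> W a b + 1"
      using pair[OF ar br ab] by blast
    have pba: "W b a \<le> W b b \<and> W a b \<le> W b b \<and> W a b \<le> W b a + 1"
      using pair[OF br ar ab[symmetric]] by blast
    consider "a = i" | "b = i" | "a \<noteq> i \<and> b \<noteq> i" by blast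
    then show ?thesis
    proof cases
      case 1
      then show ?thesis using pab pba W' clt2 cle ab ji unfolding Ai'_def c_def Ai_def
        by (cases "b = j") (auto simp: min_def)
    next
      case 2
      then show ?thesis using pab pba W' clt2 cle ab ji unfolding Ai'_def c_def Ai_def
        by (cases "a = j") (auto simp: min_def)
    next
      case 3
      then show ?thesis using pab W' by simp
    qed
  qed
  have Ww: "wsync (procs s' w) w = wsync (procs s w) w"
    using W' adopt_nw ji unfolding Ai'_def by (cases "w = i") (auto simp: Ai_def W_def)
  have Q': "wsync (procs s' a) a \<le> wsync (procs s' w) w" if ar: "a \<in> {1..n}" for a
  proof -
    have "wsync (procs s' a) a \<le> W w w"
      using W' Q[OF ar] Q[OF jr] Q[OF ir] clt2 ji unfolding Ai'_def by (cases "a = i") (auto simp: Ai_def)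
    then show ?thesis using Ww W_def by simp
  qed
  have Cw: "\<forall>x\<in>#chan s'. fst x \<in> {1..n} \<and> fst (snd x) \<in> {1..n} \<and> fst x \<noteq> fst (snd x)"
  proof -
    have "\<forall>x\<in>#chan s. fst x \<in> {1..n} \<and> fst (snd x) \<in> {1..n} \<and> fst x \<noteq> fst (snd x)"
      using I unfolding Inv_def by blast
    moreover have "\<forall>x\<in>#send_to i D (WriteM (Suc c mod 2) v). fst x \<in> {1..n} \<and> fst (snd x) \<in> {1..n} \<and> fst x \<noteq> fst (snd x)"
      using ir Dm finD unfolding send_to_def by auto
    ultimately show ?thesis using ch' ir jr ji by auto
  qed
  have Hw: "\<forall>a\<in>{1..n}. \<forall>h\<in>#pend (procs s' a). hsrc h \<in> {1..n} \<and> hsrc h \<noteq> a"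
  proof -
    have "\<forall>a\<in>{1..n}. \<forall>h\<in>#pend (procs s a). hsrc h \<in> {1..n} \<and> hsrc h \<noteq> a"
      using I unfolding Inv_def by blast
    then show ?thesis using fr pd by (metis in_diffD)
  qed
  show ?thesis unfolding Inv_def using Cw Hw P3 P12 Q' Ww by blast
qed



definition chanWF :: "nat \<Rightarrow> 'v gstate \<Rightarrow> bool" where
 "chanWF n s \<longleftrightarrow> (\<forall>x\<in>#chan s. fst x \<in> {1..n} \<and> fst (snd x) \<in> {1..n} \<and> fst x \<noteq> fst (snd x))"
definition pendWF :: "nat \<Rightarrow> 'v gstate \<Rightarrow> bool" where
 "pendWF n s \<longleftrightarrow> (\<forall>i\<in>{1..n}. \<forall>h\<in>#pend (procs s i). hsrc h \<in> {1..n} \<and> hsrc h \<noteq> i)"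

lemma Inv_WF: "Inv n w s \<Longrightarrow> chanWF n s \<and> pendWF n s"
  unfolding Inv_def chanWF_def pendWF_def by blast

lemma Inv_frame:
  assumes "Inv n w s" "\<And>x y. wsync (procs s' x) y = wsync (procs s x) y"
    "\<And>a b. tr s' a b = tr s a b" "chanWF n s'" "pendWF n s'"
  shows "Inv n w s'"
  using assms unfolding Inv_def chanWF_def pendWF_def by simp

lemma tr_frame:
  assumes "\<And>a b. trc (chan s') a b = trc (chan s) a b" "\<And>x. pend (procs s' x) = pend (procs s x)"
  shows "tr s' a b = tr s a b"
  using assms unfolding tr_def by simp


lemma Inv_crash: "Inv n w s \<Longrightarrow> Inv n w (effect n t w s (Crash i))"
  apply (rule Inv_frame, assumption)
  using Inv_WF[of n w s] by (auto simp: upd_proc_def tr_def chanWF_def pendWF_def)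

lemma Inv_stutter: "Inv n w s \<Longrightarrow> Inv n w (effect n t w s Stutter)"
  by simp

lemma Inv_opstep: "Inv n w s \<Longrightarrow> Inv n w (effect n t w s (OpStep i))"
  apply (rule Inv_frame, assumption)
  using Inv_WF[of n w s] by (auto simp: upd_proc_def tr_def chanWF_def pendWF_def split: opstate.split)

lemma Inv_invread: "Inv n w s \<Longrightarrow> i \<in> {1..n} \<Longrightarrow> Inv n w (effect n t w s (InvRead i))"
  apply (rule Inv_frame, assumption)
  subgoal by (simp add: Let_def)
  subgoal by (simp add: Let_def tr_def)
  subgoal using Inv_WF[of n w s] by (auto simp: Let_def chanWF_def send_to_def)
  subgoal using Inv_WF[of n w s] by (auto simp: Let_def pendWF_def)
  done

lemma Inv_exec_hread:
  assumes "Inv n w s" "i \<in> {1..n}" "HRead j sn \<in># pend (procs s i)"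
  shows "Inv n w (effect n t w s (Exec i (HRead j sn)))"
proof -
  have wf: "chanWF n s" "pendWF n s" using Inv_WF[OF assms(1)] by auto
  have jr: "j \<in> {1..n}" "j \<noteq> i" using wf(2) assms(2,3) unfolding pendWF_def by fastforce+
  show ?thesis
    apply (rule Inv_frame[OF assms(1)])
    subgoal by (simp add: Let_def)
    subgoal for a b using trp_diff[OF assms(3)] by (auto simp: Let_def tr_def)
    subgoal using wf jr assms(2) by (auto simp: Let_def chanWF_def)
    subgoal
    proof -
      have pe: "\<And>x. pend (procs (effect n t w s (Exec i (HRead j sn))) x) = (if x = i then pend (procs s i) - {#HRead j sn#} else pend (procs s x))"
        by (simp add: Let_def)
      show ?thesis unfolding pendWF_def pe
      proof (intro ballI)
        fix x h assume x: "x \<in> {1..n}" and h: "h \<in># (if x = i then pend (procs s i) - {#HRead j sn#} else pend (procs s x))"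
        then have "h \<in># pend (procs s x)" by (cases "x = i") (auto dest: in_diffD)
        then show "hsrc h \<in> {1..n} \<and> hsrc h \<noteq> x" using wf(2) x unfolding pendWF_def by blast
      qed
    qed
    done
qed


lemma Inv_deliver:
  assumes I: "Inv n w s" and x: "(src, dst, m) \<in># chan s"
  shows "Inv n w (effect n t w s (Deliver src dst m))"
proof -
  define s' where "s' = effect n t w s (Deliver src dst m)"
  have wf: "chanWF n s" "pendWF n s" using Inv_WF[OF I] by auto
  have sd: "src \<in> {1..n}" "dst \<in> {1..n}" "src \<noteq> dst" using wf(1) x unfolding chanWF_def by fastforce+
  have ch: "chan s' = chan s - {#(src, dst, m)#}" unfolding s'_def by (cases m) (auto simp: Let_def upd_proc_def)
  have ws: "\<And>a b. wsync (procs s' a) b = wsync (procs s a) b" unfolding s'_def by (cases m) (auto simp: Let_def upd_proc_def)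
  have cwf: "chanWF n s'" using wf(1) ch unfolding chanWF_def by (auto dest: in_diffD)
  have trc': "\<And>a b. trc (chan s') a b = trc (chan s) a b - (if src = a \<and> dst = b \<and> iswm m then {#mbit m#} else {#})"
    unfolding ch using trc_diff[OF x] by simp
  have "Inv n w s'"
  proof (cases m)
    case (WriteM b v)
    have pe: "\<And>y. pend (procs s' y) = (if y = dst then add_mset (HWrite src b v) (pend (procs s y)) else pend (procs s y))"
      unfolding s'_def WriteM by (auto simp: Let_def upd_proc_def)
    show ?thesis
    proof (rule Inv_frame[OF I ws])
      fix a c
      show "tr s' a c = tr s a c"
      proof (cases "src = a \<and> dst = c")
        case True
        have sub: "{#b#} \<subseteq># trc (chan s) a c" using x True WriteM unfolding trc_def by force
        have "tr s' a c = (trc (chan s) a c - {#b#}) + add_mset b (trp (pend (procs s c)) a)"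
          unfolding tr_def trc' pe using True WriteM by simp
        also have "\<dots> = tr s a c" unfolding tr_def using sub
          by (metis add_mset_add_single subset_mset.diff_add union_assoc union_commute)
        finally show ?thesis .
      next
        case False
        then show ?thesis unfolding tr_def trc' pe using WriteM by auto
      qed
    next
      show "chanWF n s'" by (rule cwf)
      show "pendWF n s'" using wf(2) sd unfolding pendWF_def pe by auto
    qed
  next
    case ReadM
    have pe: "\<And>y. pend (procs s' y) = (if y = dst then add_mset (HRead src (wsync (procs s dst) dst)) (pend (procs s y)) else pend (procs s y))"
      unfolding s'_def ReadM by (auto simp: Let_def upd_proc_def)
    show ?thesis
    proof (rule Inv_frame[OF I ws])
      fix a c
      show "tr s' a c = tr s a c" unfolding tr_def trc' pe using ReadM by auto
    next
      show "chanWF n s'" by (rule cwf)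
      show "pendWF n s'" using wf(2) sd unfolding pendWF_def pe by auto
    qed
  next
    case ProceedM
    have pe: "\<And>y. pend (procs s' y) = pend (procs s y)"
      unfolding s'_def ProceedM by (auto simp: Let_def upd_proc_def)
    show ?thesis
    proof (rule Inv_frame[OF I ws])
      fix a c
      show "tr s' a c = tr s a c" unfolding tr_def trc' pe using ProceedM by auto
    next
      show "chanWF n s'" by (rule cwf)
      show "pendWF n s'" using wf(2) unfolding pendWF_def pe by auto
    qed
  qed
  then show ?thesis by (simp add: s'_def)
qed


lemma Inv_exec_hwrite:
  assumes I: "Inv n w s" and wn: "w \<in> {1..n}" and ir: "i \<in> {1..n}"
    and hin: "HWrite j \<beta> v \<in># pend (procs s i)"
    and bet: "\<beta> = Suc (wsync (procs s i) j) mod 2"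
  shows "Inv n w (effect n t w s (Exec i (HWrite j \<beta> v))) \<and>
    wsync (procs (effect n t w s (Exec i (HWrite j \<beta> v))) w) w = wsync (procs s w) w"
proof -
  define s' where "s' = effect n t w s (Exec i (HWrite j \<beta> v))"
  have ji: "j \<noteq> i" using Inv_WF[OF I] ir hin unfolding pendWF_def by fastforce
  have "Inv n w s' \<and> wsync (procs s' w) w = wsync (procs s w) w"
  proof (rule Inv_exec_abs[OF I wn ir hin bet, where u = "hist (procs s i) (Suc (Suc (wsync (procs s i) j)))"])
    show "\<And>x. x \<noteq> i \<Longrightarrow> procs s' x = procs s x" unfolding s'_def by (auto simp: Let_def)
    show "pend (procs s' i) = pend (procs s i) - {#HWrite j \<beta> v#}" unfolding s'_def by (auto simp: Let_def)
    show "wsync (procs s' i) = (wsync (procs s i))(i := (if wsync (procs s i) j = wsync (procs s i) i then Suc (wsync (procs s i) j) else wsync (procs s i) i), j := Suc (wsync (procs s i) j))"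
      unfolding s'_def using ji by (auto simp: Let_def fun_eq_iff)
    show "chan s' = chan s + (if wsync (procs s i) j = wsync (procs s i) i
         then send_to i {l\<in>{1..n}. ((wsync (procs s i))(i := Suc (wsync (procs s i) j))) l = wsync (procs s i) j} (WriteM (Suc (wsync (procs s i) j) mod 2) v)
         else if Suc (wsync (procs s i) j) < wsync (procs s i) i then {#(i,j,WriteM (Suc (Suc (wsync (procs s i) j)) mod 2) (hist (procs s i) (Suc (Suc (wsync (procs s i) j)))))#} else {#})"
      unfolding s'_def by (auto simp: Let_def)
  qed
  then show ?thesis by (simp add: s'_def)
qed


lemma Inv_invwrite:
  assumes I: "Inv n w s" and wn: "w \<in> {1..n}"
  shows "Inv n w (effect n t w s (InvWrite v))"
proof -
  define s' where "s' = effect n t w s (InvWrite v)"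
  define W where "W = (\<lambda>x y. wsync (procs s x) y)"
  define Aw where "Aw = W w w"
  define D where "D = {l\<in>{1..n}. ((W w)(w := Suc Aw)) l = Aw}"
  have Dm: "\<And>b. b \<in> D \<longleftrightarrow> b \<in> {1..n} \<and> b \<noteq> w \<and> W w b = Aw" unfolding D_def by auto
  have finD: "finite D" unfolding D_def by simp
  have wf: "chanWF n s" "pendWF n s" using Inv_WF[OF I] by auto
  have pair: "\<And>a b. a \<in> {1..n} \<Longrightarrow> b \<in> {1..n} \<Longrightarrow> a \<noteq> b \<Longrightarrow>
    W a b \<le> W a a \<and> W b a \<le> W a a \<and> W b a \<le> W a b + 1 \<and> tr s a b = bits (W b a) (min (W a a) (W a b + 1))"
    using I unfolding Inv_def W_def by blast
  have Q: "\<And>a. a \<in> {1..n} \<Longrightarrow> W a a \<le> W w w" using I unfolding Inv_def W_def by blast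
  have W': "\<And>x y. wsync (procs s' x) y = (if x = w \<and> y = w then Suc Aw else W x y)"
    unfolding s'_def W_def Aw_def by (auto simp: Let_def)
  have pe: "\<And>x. pend (procs s' x) = pend (procs s x)" unfolding s'_def by (auto simp: Let_def)
  have ch: "chan s' = chan s + send_to w D (WriteM (Suc Aw mod 2) v)"
    unfolding s'_def D_def W_def Aw_def by (simp add: Let_def)
  have trs': "\<And>a b. tr s' a b = tr s a b + (if a = w \<and> b \<in> D then {#Suc Aw mod 2#} else {#})"
    unfolding tr_def ch pe using finD by simp
  have P: "wsync (procs s' a) b \<le> wsync (procs s' a) a \<and> wsync (procs s' b) a \<le> wsync (procs s' a) a \<and>
      wsync (procs s' b) a \<le> wsync (procs s' a) b + 1 \<and>
      tr s' a b = bits (wsync (procs s' b) a) (min (wsync (procs s' a) a) (wsync (procs s' a) b + 1))"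
    if ar: "a \<in> {1..n}" and br: "b \<in> {1..n}" and ab: "a \<noteq> b" for a b
  proof -
    have pab: "W a b \<le> W a a \<and> W b a \<le> W a a \<and> W b a \<le> W a b + 1 \<and> tr s a b = bits (W b a) (min (W a a) (W a b + 1))"
      using pair[OF ar br ab] .
    show ?thesis
    proof (cases "a = w")
      case True
      show ?thesis
      proof (cases "W w b = Aw")
        case T2: True
        have "W b w \<le> Aw" using pab True Aw_def by simp
        then show ?thesis using pab True T2 ab br Dm trs' W' bits_snoc[of "W b w" Aw] Aw_def by (simp add: min_def)
      next
        case F2: False
        have "W w b < Aw" using pab True F2 Aw_def by simp
        then have m: "min Aw (Suc (W w b)) = Suc (W w b)" "min (Suc Aw) (Suc (W w b)) = Suc (W w b)" by auto
        show ?thesis using pab True F2 ab br Dm trs' W' m Aw_def by simp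
      qed
    next
      case False
      then show ?thesis using pab ab trs' W' Aw_def by auto
    qed
  qed
  have "Inv n w s'" unfolding Inv_def
  proof (intro conjI)
    show "\<forall>x\<in>#chan s'. fst x \<in> {1..n} \<and> fst (snd x) \<in> {1..n} \<and> fst x \<noteq> fst (snd x)"
      using wf(1) wn Dm finD unfolding ch chanWF_def send_to_def by auto
    show "\<forall>i\<in>{1..n}. \<forall>h\<in>#pend (procs s' i). hsrc h \<in> {1..n} \<and> hsrc h \<noteq> i"
      using wf(2) unfolding pendWF_def pe by blast
    show "\<forall>i\<in>{1..n}. \<forall>j\<in>{1..n}. i \<noteq> j \<longrightarrow>
    wsync (procs s' i) j \<le> wsync (procs s' i) i \<and>
    wsync (procs s' j) i \<le> wsync (procs s' i) i \<and>
    wsync (procs s' j) i \<le> wsync (procs s' i) j + 1 \<and>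
    tr s' i j = bits (wsync (procs s' j) i) (min (wsync (procs s' i) i) (wsync (procs s' i) j + 1))"
      using P by blast
    show "\<forall>i\<in>{1..n}. wsync (procs s' i) i \<le> wsync (procs s' w) w"
    proof
      fix i assume ir: "i \<in> {1..n}"
      show "wsync (procs s' i) i \<le> wsync (procs s' w) w" using Q[OF ir] W' Aw_def by (cases "i = w") auto
    qed
  qed
  then show ?thesis by (simp add: s'_def)
qed



lemma Inv_init: "initial n v0 s \<Longrightarrow> Inv n w s"
  unfolding initial_def Inv_def tr_def trp_def by (simp add: bits_def)

lemma Inv_step:
  assumes I: "Inv n w s" and wn: "w \<in> {1..n}" and st: "step n t w s a s'"
  shows "Inv n w s' \<and> ((\<forall>v. a \<noteq> InvWrite v) \<longrightarrow> wsync (procs s' w) w = wsync (procs s w) w)"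
proof -
  have en: "enabled n t w s a" and s': "s' = effect n t w s a" using st unfolding step_def by auto
  show ?thesis
  proof (cases a)
    case (InvWrite v)
    then show ?thesis using Inv_invwrite[OF I wn] s' by simp
  next
    case (InvRead i)
    then show ?thesis using Inv_invread[OF I] s' en by (auto simp: Let_def)
  next
    case (OpStep i)
    then show ?thesis using Inv_opstep[OF I] s' by (auto simp: upd_proc_def split: opstate.split)
  next
    case (Deliver src dst m)
    have "(src, dst, m) \<in># chan s" using en Deliver by simp
    then have "Inv n w s'" unfolding s' Deliver by (rule Inv_deliver[OF I])
    moreover have "wsync (procs s' w) w = wsync (procs s w) w"
      unfolding s' Deliver by (cases m) (auto simp: Let_def upd_proc_def)
    ultimately show ?thesis by simp
  next
    case (Exec i h)
    show ?thesis
    proof (cases h)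
      case (HWrite j b v)
      then show ?thesis using Inv_exec_hwrite[OF I wn] s' en Exec by auto
    next
      case (HRead j sn)
      then show ?thesis using Inv_exec_hread[OF I] s' en Exec by (auto simp: Let_def)
    qed
  next
    case (Crash i)
    then show ?thesis using Inv_crash[OF I] s' by (auto simp: upd_proc_def)
  next
    case Stutter
    then show ?thesis using I s' by simp
  qed
qed

lemma wsync_mono: "step n t w s a s' \<Longrightarrow> wsync (procs s x) y \<le> wsync (procs s' x) y"
  unfolding step_def
  by (cases a) (auto simp: Let_def upd_proc_def split: opstate.split msg.split handler.split)

lemma crashed_mono: "step n t w s a s' \<Longrightarrow> crashed (procs s x) \<Longrightarrow> crashed (procs s' x)"
  unfolding step_def
  by (cases a) (auto simp: Let_def upd_proc_def split: opstate.split msg.split handler.split)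

lemma op_keep: "step n t w s a s' \<Longrightarrow> a \<noteq> InvRead x \<Longrightarrow> a \<noteq> OpStep x \<Longrightarrow> (\<forall>v. a \<noteq> InvWrite v) \<Longrightarrow>
   op (procs s' x) = op (procs s x)"
  unfolding step_def
  by (cases a) (auto simp: Let_def upd_proc_def split: opstate.split msg.split handler.split)

lemma pend_keep: "step n t w s a s' \<Longrightarrow> h \<in># pend (procs s x) \<Longrightarrow> a \<noteq> Exec x h \<Longrightarrow> h \<in># pend (procs s' x)"
  unfolding step_def
  by (cases a) (auto simp: Let_def upd_proc_def in_diff_count split: opstate.split msg.split handler.split)

lemma chan_keep: "step n t w s a s' \<Longrightarrow> (p, q, m) \<in># chan s \<Longrightarrow> a \<noteq> Deliver p q m \<Longrightarrow> (p, q, m) \<in># chan s'"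
  unfolding step_def
  by (cases a) (auto simp: Let_def upd_proc_def in_diff_count split: opstate.split msg.split handler.split)



lemma exec_hw_inc: "step n t w s (Exec j (HWrite i b v)) s' \<Longrightarrow> i \<noteq> j \<Longrightarrow> wsync (procs s' j) i = Suc (wsync (procs s j) i)"
  unfolding step_def by (simp add: Let_def split: if_split)

lemma deliver_write: "step n t w s (Deliver p q (WriteM b v)) s' \<Longrightarrow> HWrite p b v \<in># pend (procs s' q)"
  unfolding step_def by (auto simp: Let_def upd_proc_def)

lemma opstep_noop: "step n t w s (OpStep x) s' \<Longrightarrow> op (procs s x) = WOp m \<Longrightarrow> op (procs s' x) = NoOp"
  unfolding step_def by (auto simp: upd_proc_def)

lemma invwrite_eff: "step n t w s (InvWrite v) s' \<Longrightarrow> op (procs s' w) = WOp (Suc (wsync (procs s w) w)) \<and> wsync (procs s' w) w = Suc (wsync (procs s w) w)"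
  unfolding step_def by (simp add: Let_def)

lemma stab:
  fixes f :: "nat \<Rightarrow> nat"
  assumes m: "\<And>k. f k \<le> f (Suc k)" and b: "\<And>k. k \<ge> k0 \<Longrightarrow> f k \<le> B"
  shows "\<exists>T\<ge>k0. \<forall>k\<ge>T. f k = f T"
  using b
proof (induction "B - f k0" arbitrary: k0 rule: less_induct)
  case less
  show ?case
  proof (cases "\<forall>k\<ge>k0. f k = f k0")
    case True
    then show ?thesis by blast
  next
    case False
    then obtain k1 where k1: "k1 \<ge> k0" "f k1 \<noteq> f k0" by auto
    have "f k0 \<le> f k1" using lift_Suc_mono_le[of f, OF m k1(1)] .
    then have lt: "f k0 < f k1" using k1 by simp
    have "f k1 \<le> B" using less.prems k1 by simp
    then have "B - f k1 < B - f k0" using lt by simp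
    have b1: "\<And>k. k \<ge> k1 \<Longrightarrow> f k \<le> B" using less.prems k1 by simp
    obtain T where "T \<ge> k1" "\<forall>k\<ge>T. f k = f T" using less.hyps[OF \<open>B - f k1 < B - f k0\<close> b1] by blast
    then show ?thesis using k1 by (meson order_trans)
  qed
qed




lemma prog:
  assumes run: "\<forall>k. step n t w (\<sigma> k) (act k) (\<sigma> (Suc k))"
    and fair: "weakly_fair n t w \<sigma> act"
    and ij: "i \<noteq> j" and jr: "j \<in> {1..n}"
    and nc: "\<forall>k. \<not> crashed (procs (\<sigma> k) j)"
    and stable: "\<forall>k'\<ge>T. wsync (procs (\<sigma> k') j) i = d"
    and mem: "Suc d mod 2 \<in># tr (\<sigma> T) i j"
  shows False
proof -
  define \<beta> where "\<beta> = Suc d mod 2"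
  have pendcase: "False" if hp: "HWrite i \<beta> v \<in># pend (procs (\<sigma> T1) j)" and T1: "T1 \<ge> T" for v T1
  proof -
    define h where "h = HWrite i \<beta> v"
    have ex: "\<exists>k'\<ge>T1. act k' = Exec j h"
    proof (rule ccontr)
      assume nex: "\<not> (\<exists>k'\<ge>T1. act k' = Exec j h)"
      have inp: "h \<in># pend (procs (\<sigma> k') j)" if "k' \<ge> T1" for k'
        using that
      proof (induction k' rule: dec_induct)
        case base then show ?case using hp h_def by simp
      next
        case (step m)
        then show ?case using pend_keep[OF run[rule_format, of m]] nex by auto
      qed
      have "\<forall>k'\<ge>T1. enabled n t w (\<sigma> k') (Exec j h)"
        using inp nc jr stable T1 unfolding h_def \<beta>_def by auto
      then have "\<exists>k'\<ge>T1. act k' = Exec j h" using fair unfolding weakly_fair_def by auto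
      then show False using nex by blast
    qed
    then obtain k' where k': "k' \<ge> T1" "act k' = Exec j h" by blast
    have "wsync (procs (\<sigma> (Suc k')) j) i = Suc (wsync (procs (\<sigma> k') j) i)"
    proof (rule exec_hw_inc[OF _ ij])
      show "step n t w (\<sigma> k') (Exec j (HWrite i \<beta> v)) (\<sigma> (Suc k'))" using run k'(2) h_def by metis
    qed
    then show False using stable k' T1 by auto
  qed
  have chancase: "False" if hc: "(i, j, WriteM \<beta> v) \<in># chan (\<sigma> T)" for v
  proof -
    define x where "x = WriteM \<beta> v"
    have ex: "\<exists>k'\<ge>T. act k' = Deliver i j x"
    proof (rule ccontr)
      assume nex: "\<not> (\<exists>k'\<ge>T. act k' = Deliver i j x)"
      have inc: "(i, j, x) \<in># chan (\<sigma> k')" if "k' \<ge> T" for k'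
        using that
      proof (induction k' rule: dec_induct)
        case base then show ?case using hc x_def by simp
      next
        case (step m)
        then show ?case using chan_keep[OF run[rule_format, of m]] nex by auto
      qed
      have "\<forall>k'\<ge>T. enabled n t w (\<sigma> k') (Deliver i j x)"
        using inc nc by auto
      then have "\<exists>k'\<ge>T. act k' = Deliver i j x" using fair unfolding weakly_fair_def by auto
      then show False using nex by blast
    qed
    then obtain k' where k': "k' \<ge> T" "act k' = Deliver i j x" by blast
    have "HWrite i \<beta> v \<in># pend (procs (\<sigma> (Suc k')) j)"
    proof (rule deliver_write)
      show "step n t w (\<sigma> k') (Deliver i j (WriteM \<beta> v)) (\<sigma> (Suc k'))" using run k'(2) x_def by metis
    qed
    from pendcase[OF this] show False using k'(1) by simp
  qed
  have "\<beta> \<in># trc (chan (\<sigma> T)) i j \<or> \<beta> \<in># trp (pend (procs (\<sigma> T) j)) i"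
    using mem unfolding tr_def \<beta>_def by auto
  then show False
  proof
    assume "\<beta> \<in># trc (chan (\<sigma> T)) i j"
    then obtain a b m where "(a, b, m) \<in># chan (\<sigma> T)" "a = i" "b = j" "iswm m" "mbit m = \<beta>"
      unfolding trc_def by auto
    then show False using chancase by (cases m) auto
  next
    assume "\<beta> \<in># trp (pend (procs (\<sigma> T) j)) i"
    then obtain h where "h \<in># pend (procs (\<sigma> T) j)" "hfrom i h" "hbit h = \<beta>"
      unfolding trp_def by auto
    then show False using pendcase by (cases h) auto
  qed
qed



theorem lemma8:
  fixes n t w :: nat and v0 :: 'v
    and \<sigma> :: "nat \<Rightarrow> 'v gstate" and act :: "nat \<Rightarrow> 'v action"
  assumes "2 * t < n"
    and "w \<in> {1..n}"
    and "is_run n t w v0 \<sigma> act"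
    and "weakly_fair n t w \<sigma> act"
    and "card (faulty n \<sigma>) \<le> t"
    and "act k = InvWrite v"
    and "\<forall>k'>k. crashed (procs (\<sigma> k') w) \<longrightarrow> (\<exists>k''\<in>{k<..k'}. op (procs (\<sigma> k'') w) = NoOp)"
  shows "\<exists>k'>k. op (procs (\<sigma> k') w) = NoOp"
proof (rule ccontr)
  assume H: "\<not> (\<exists>k'>k. op (procs (\<sigma> k') w) = NoOp)"
  note wn = assms(2) and fair = assms(4)
  have init: "initial n v0 (\<sigma> 0)" and run: "\<forall>k. step n t w (\<sigma> k) (act k) (\<sigma> (Suc k))"
    using assms(3) unfolding is_run_def by auto
  have stepk: "\<And>k. step n t w (\<sigma> k) (act k) (\<sigma> (Suc k))" using run by blast
  have Invs: "\<And>k. Inv n w (\<sigma> k)"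
  proof -
    fix k show "Inv n w (\<sigma> k)"
    proof (induction k)
      case 0 then show ?case using Inv_init[OF init] by blast
    next
      case (Suc k) then show ?case using Inv_step[OF Suc wn stepk[of k]] by blast
    qed
  qed
  have crmono: "crashed (procs (\<sigma> k2) x)" if "k1 \<le> k2" "crashed (procs (\<sigma> k1) x)" for x k1 k2
    using that
  proof (induction k2 rule: dec_induct)
    case base then show ?case by simp
  next
    case (step m) then show ?case using crashed_mono[OF stepk[of m]] by blast
  qed
  have wmono: "wsync (procs (\<sigma> k1) x) y \<le> wsync (procs (\<sigma> k2) x) y" if "k1 \<le> k2" for x y k1 k2
    using that
  proof (induction k2 rule: dec_induct)
    case base then show ?case by simp
  next
    case (step m) then show ?case using wsync_mono[OF stepk[of m], of x y] by linarith
  qed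
  have enk: "enabled n t w (\<sigma> k) (InvWrite v)" using stepk[of k] assms(6) unfolding step_def by simp
  have wnc: "\<not> crashed (procs (\<sigma> k') w)" for k'
  proof
    assume c: "crashed (procs (\<sigma> k') w)"
    show False
    proof (cases "k' \<le> k")
      case True
      then have "crashed (procs (\<sigma> k) w)" using crmono c by blast
      then show False using enk by simp
    next
      case False
      then have "k < k'" by simp
      then obtain k'' where "k'' \<in> {k<..k'}" "op (procs (\<sigma> k'') w) = NoOp" using assms(7) c by blast
      then show False using H by auto
    qed
  qed
  define wsn where "wsn = Suc (wsync (procs (\<sigma> k) w) w)"
  have ow0: "op (procs (\<sigma> (Suc k + m)) w) = WOp wsn \<and> wsync (procs (\<sigma> (Suc k + m)) w) w = wsn" for m
  proof (induction m)
    case 0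
    then show ?case using invwrite_eff[of n t w "\<sigma> k" v "\<sigma> (Suc k)"] stepk[of k] assms(6) wsn_def by simp
  next
    case (Suc m)
    define k1 where "k1 = Suc k + m"
    have o1: "op (procs (\<sigma> k1) w) = WOp wsn" and a1: "wsync (procs (\<sigma> k1) w) w = wsn" using Suc k1_def by auto
    have st: "step n t w (\<sigma> k1) (act k1) (\<sigma> (Suc k1))" using stepk by blast
    have nop: "act k1 \<noteq> OpStep w"
    proof
      assume "act k1 = OpStep w"
      then have "op (procs (\<sigma> (Suc k1)) w) = NoOp" using opstep_noop[of n t w "\<sigma> k1" w "\<sigma> (Suc k1)" wsn] st o1 by simp
      moreover have "Suc k1 > k" using k1_def by simp
      ultimately show False using H by blast
    qed
    have nir: "act k1 \<noteq> InvRead w" using st o1 unfolding step_def by auto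
    have niw: "\<forall>v'. act k1 \<noteq> InvWrite v'" using st o1 unfolding step_def by auto
    have "op (procs (\<sigma> (Suc k1)) w) = WOp wsn" using op_keep[OF st nir nop niw] o1 by simp
    moreover have "wsync (procs (\<sigma> (Suc k1)) w) w = wsn" using Inv_step[OF Invs wn st] niw a1 by simp
    ultimately show ?case using k1_def by simp
  qed
  have ow: "op (procs (\<sigma> k') w) = WOp wsn \<and> wsync (procs (\<sigma> k') w) w = wsn" if "k' > k" for k'
    using ow0[of "k' - Suc k"] that by simp
  define C where "C = {1..n} - faulty n \<sigma>"
  have Cr: "C \<subseteq> {1..n}" unfolding C_def by auto
  have finC: "finite C" using Cr finite_subset by blast
  have Cnc: "\<forall>k. \<not> crashed (procs (\<sigma> k) j)" if "j \<in> C" for j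
    using that unfolding C_def faulty_def by auto
  have pairI: "\<And>k a b. a \<in> {1..n} \<Longrightarrow> b \<in> {1..n} \<Longrightarrow> a \<noteq> b \<Longrightarrow>
    wsync (procs (\<sigma> k) a) b \<le> wsync (procs (\<sigma> k) a) a \<and>
    wsync (procs (\<sigma> k) b) a \<le> wsync (procs (\<sigma> k) a) a \<and>
    wsync (procs (\<sigma> k) b) a \<le> wsync (procs (\<sigma> k) a) b + 1 \<and>
    tr (\<sigma> k) a b = bits (wsync (procs (\<sigma> k) b) a) (min (wsync (procs (\<sigma> k) a) a) (wsync (procs (\<sigma> k) a) b + 1))"
    using Invs unfolding Inv_def by blast
  have QI: "\<And>k a. a \<in> {1..n} \<Longrightarrow> wsync (procs (\<sigma> k) a) a \<le> wsync (procs (\<sigma> k) w) w"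
    using Invs unfolding Inv_def by blast
  have conv: "\<exists>K. \<forall>k'\<ge>K. wsync (procs (\<sigma> k') w) j = wsn" if jC: "j \<in> C" for j
  proof (cases "j = w")
    case True
    then show ?thesis using ow by (metis Suc_le_eq)
  next
    case jw: False
    have jr: "j \<in> {1..n}" using jC Cr by auto
    define f1 where "f1 = (\<lambda>k. wsync (procs (\<sigma> k) w) j)"
    define f2 where "f2 = (\<lambda>k. wsync (procs (\<sigma> k) j) w)"
    define f3 where "f3 = (\<lambda>k. wsync (procs (\<sigma> k) j) j)"
    have b1: "f1 k' \<le> wsn" if "k' \<ge> Suc k" for k'
      using pairI[OF wn jr jw[symmetric], of k'] ow[of k'] that unfolding f1_def by simp
    have b2: "f2 k' \<le> wsn" if "k' \<ge> Suc k" for k'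
      using pairI[OF wn jr jw[symmetric], of k'] ow[of k'] that unfolding f2_def by simp
    have b3: "f3 k' \<le> wsn" if "k' \<ge> Suc k" for k'
      using QI[OF jr, of k'] ow[of k'] that unfolding f3_def by simp
    have mf1: "f1 k' \<le> f1 (Suc k')" for k' unfolding f1_def by (rule wmono) simp
    obtain T1 where T1: "T1 \<ge> Suc k" "\<forall>k'\<ge>T1. f1 k' = f1 T1"
      using stab[of f1 "Suc k" wsn, OF mf1 b1] by blast
    have mf2: "f2 k' \<le> f2 (Suc k')" for k' unfolding f2_def by (rule wmono) simp
    obtain T2 where T2: "T2 \<ge> Suc k" "\<forall>k'\<ge>T2. f2 k' = f2 T2"
      using stab[of f2 "Suc k" wsn, OF mf2 b2] by blast
    have mf3: "f3 k' \<le> f3 (Suc k')" for k' unfolding f3_def by (rule wmono) simp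
    obtain T3 where T3: "T3 \<ge> Suc k" "\<forall>k'\<ge>T3. f3 k' = f3 T3"
      using stab[of f3 "Suc k" wsn, OF mf3 b3] by blast
    define T where "T = T1 + T2 + T3"
    have s1: "\<forall>k'\<ge>T. f1 k' = f1 T"
    proof (intro allI impI)
      fix k' assume kT: "T \<le> k'"
      have tt: "T1 \<le> T" unfolding T_def by simp
      have x1: "f1 k' = f1 T1" using T1(2) kT tt le_trans by blast
      have x2: "f1 T = f1 T1" using T1(2) tt by blast
      show "f1 k' = f1 T" using x1 x2 by simp
    qed
    have s2: "\<forall>k'\<ge>T. f2 k' = f2 T"
    proof (intro allI impI)
      fix k' assume kT: "T \<le> k'"
      have tt: "T2 \<le> T" unfolding T_def by simp
      have x1: "f2 k' = f2 T2" using T2(2) kT tt le_trans by blast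
      have x2: "f2 T = f2 T2" using T2(2) tt by blast
      show "f2 k' = f2 T" using x1 x2 by simp
    qed
    have s3: "\<forall>k'\<ge>T. f3 k' = f3 T"
    proof (intro allI impI)
      fix k' assume kT: "T \<le> k'"
      have tt: "T3 \<le> T" unfolding T_def by simp
      have x1: "f3 k' = f3 T3" using T3(2) kT tt le_trans by blast
      have x2: "f3 T = f3 T3" using T3(2) tt by blast
      show "f3 k' = f3 T" using x1 x2 by simp
    qed
    have Tk: "T > k" using T1 unfolding T_def by simp
    define c where "c = f1 T"
    define d where "d = f2 T"
    define a where "a = f3 T"
    have e1: "\<forall>k'\<ge>T. wsync (procs (\<sigma> k') w) j = c" using s1 unfolding c_def f1_def by blast
    have e2: "\<forall>k'\<ge>T. wsync (procs (\<sigma> k') j) w = d" using s2 unfolding d_def f2_def by blast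
    show ?thesis
    proof (cases "c = wsn")
      case True
      then have "\<forall>k'\<ge>T. wsync (procs (\<sigma> k') w) j = wsn" using e1 by blast
      then show ?thesis by blast
    next
      case False
      have wT: "wsync (procs (\<sigma> T) w) w = wsn" using ow Tk by blast
      have pwj: "c \<le> wsn \<and> d \<le> wsn \<and> d \<le> c + 1 \<and> tr (\<sigma> T) w j = bits d (min wsn (c + 1))"
        using pairI[OF wn jr jw[symmetric], of T] wT unfolding c_def d_def f1_def f2_def by simp
      have pjw: "d \<le> a \<and> c \<le> a \<and> c \<le> d + 1 \<and> tr (\<sigma> T) j w = bits c (min a (d + 1))"
        using pairI[OF jr wn jw, of T] unfolding c_def d_def a_def f1_def f2_def f3_def by simp
      have clt: "c < wsn" using False pwj by simp
      show ?thesis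
      proof (cases "d < min wsn (c + 1)")
        case True
        have m1: "Suc d mod 2 \<in># tr (\<sigma> T) w j" using pwj bits_first[OF True] by simp
        have m2: "\<forall>k'\<ge>T. wsync (procs (\<sigma> k') j) w = d" using e2 by blast
        have False by (rule prog[OF run fair jw[symmetric] jr Cnc[OF jC] m2 m1])
        then show ?thesis ..
      next
        case F2: False
        show ?thesis
        proof (cases "c < min a (d + 1)")
          case True
          have m1: "Suc c mod 2 \<in># tr (\<sigma> T) j w" using pjw bits_first[OF True] by simp
          have m2: "\<forall>k'\<ge>T. wsync (procs (\<sigma> k') w) j = c" using e1 by blast
          have m3: "\<forall>k. \<not> crashed (procs (\<sigma> k) w)" using wnc by blast
          have False by (rule prog[OF run fair jw wn m3 m2 m1])
          then show ?thesis ..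
        next
          case F3: False
          have False using F2 F3 clt pwj pjw by linarith
          then show ?thesis ..
        qed
      qed
    qed
  qed
  have "\<forall>j\<in>C. \<exists>K. \<forall>k'\<ge>K. wsync (procs (\<sigma> k') w) j = wsn" using conv by blast
  from bchoice[OF this] obtain Kf where Kf: "\<forall>j\<in>C. \<forall>k'\<ge>Kf j. wsync (procs (\<sigma> k') w) j = wsn"
    by blast
  define K where "K = Suc k + sum Kf C"
  have allC: "wsync (procs (\<sigma> k') w) j = wsn" if "k' \<ge> K" "j \<in> C" for k' j
  proof -
    have "Kf j \<le> sum Kf C" using member_le_sum[of j C Kf] that(2) finC by simp
    then show ?thesis using Kf that unfolding K_def by auto
  qed
  have fsub: "faulty n \<sigma> \<subseteq> {1..n}" unfolding faulty_def by auto
  have cardC: "card C \<ge> n - t"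
  proof -
    have "card C = card {1..n} - card (faulty n \<sigma>)" unfolding C_def
      using card_Diff_subset[OF finite_subset[OF fsub] fsub] by simp
    then show ?thesis using assms(5) by simp
  qed
  have en: "enabled n t w (\<sigma> k') (OpStep w)" if "k' \<ge> K" for k'
  proof -
    have kk: "k' > k" using that unfolding K_def by simp
    have "C \<subseteq> {j\<in>{1..n}. wsync (procs (\<sigma> k') w) j = wsn}" using allC[OF that] Cr by auto
    then have "card C \<le> card {j\<in>{1..n}. wsync (procs (\<sigma> k') w) j = wsn}" by (intro card_mono) auto
    then show ?thesis using cardC wn wnc ow[OF kk] by simp
  qed
  have "\<forall>k'\<ge>K. enabled n t w (\<sigma> k') (OpStep w)" using en by blast
  then have "\<exists>k'\<ge>K. act k' = OpStep w"
    using fair[unfolded weakly_fair_def, rule_format, of "OpStep w" K] by simp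
  then obtain k' where k': "k' \<ge> K" "act k' = OpStep w" by blast
  have "op (procs (\<sigma> (Suc k')) w) = NoOp"
    using opstep_noop[of n t w "\<sigma> k'" w "\<sigma> (Suc k')" wsn] stepk[of k'] k'(2) ow[of k'] k'(1) unfolding K_def by simp
  moreover have "Suc k' > k" using k'(1) unfolding K_def by simp
  ultimately show False using H by blast
qed


end
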